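(* Let $m,n\ge1$ be integers and $f\in C[0,1]$, and let $I_{n,m}(f)=\frac{1}{m(n+1)}\sum_{k=1}^m\sum_{i=0}^n f\left(\frac{kn-n+i}{mn}\right)$. Then (i) $\left|\int_0^1f(x)\,dx-I_{n,m}(f)\right|\le 2K\left(\frac{1}{24m^2n},f;C^0[0,1],C^2[0,1]\right)$; (ii) $\left|\int_0^1f(x)\,dx-I_{n,m}(f)\right|\le\frac94\,\omega_2\left(f;\frac{1}{m\sqrt{6n}}\right)$.
   Context: $I_{n,m}(f)$ equals $\int_0^1\overline{B}_{n,m}(f;x)\,dx$ for the composite Bernstein operator $\overline{B}_{n,m}(f;x)=B_n^{[\frac{k-1}{m},\frac km]}(f;x)$ on $\left[\frac{k-1}{m},\frac km\right]$, where $B_n^{[a,b]}(f;x)=\frac{1}{(b-a)^n}\sum_{i=0}^n\binom ni(x-a)^i(b-x)^{n-i}f(a+i\frac{b-a}{n})$. The $K$-functional is $K(\delta,f;C^0[0,1],C^2[0,1])=\inf\{\|f-g\|_\infty+\delta\|g''\|_\infty: g\in C^2[0,1]\}$ for $\delta\ge0$. $\omega_2(f,\delta)=\sup\{|f(x-h)-2f(x)+f(x+h)|: x\pm h\in[0,1],\ |h|\le\delta\}$. *)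

theory Defs
  imports "HOL-Analysis.Analysis"
begin

definition supnorm01 :: "(real \<Rightarrow> real) \<Rightarrow> real" where
  "supnorm01 g = (SUP x\<in>{0..1}. \<bar>g x\<bar>)"

definition C2_01 :: "(real \<Rightarrow> real) \<Rightarrow> (real \<Rightarrow> real) \<Rightarrow> (real \<Rightarrow> real) \<Rightarrow> bool" where
  "C2_01 g g1 g2 \<longleftrightarrow>
     (\<forall>x\<in>{0..1}. (g has_real_derivative g1 x) (at x within {0..1})) \<and>
     (\<forall>x\<in>{0..1}. (g1 has_real_derivative g2 x) (at x within {0..1})) \<and>
     continuous_on {0..1} g2"

definition Kfun :: "real \<Rightarrow> (real \<Rightarrow> real) \<Rightarrow> real" where
  "Kfun \<delta> f = Inf {supnorm01 (\<lambda>x. f x - g x) + \<delta> * supnorm01 g2 | g g1 g2. C2_01 g g1 g2}"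

definition omega2 :: "(real \<Rightarrow> real) \<Rightarrow> real \<Rightarrow> real" where
  "omega2 f \<delta> = Sup {\<bar>f (x - h) - 2 * f x + f (x + h)\<bar> | x h.
      x - h \<in> {0..1} \<and> x + h \<in> {0..1} \<and> \<bar>h\<bar> \<le> \<delta>}"

definition Inm :: "nat \<Rightarrow> nat \<Rightarrow> (real \<Rightarrow> real) \<Rightarrow> real" where
  "Inm n m f = (1 / (real m * (real n + 1))) *
     (\<Sum>k=1..m. \<Sum>i=0..n. f ((real k * real n - real n + real i) / (real m * real n)))"

end

theory Submission
  imports Defs
begin


lemma bern_int:
  assumes "i \<le> n"
  shows "((\<lambda>x. Bernstein n i x) has_integral (1 / (real n + 1))) {0..1}"
proof -
  have "((\<lambda>t. t powr (real i + 1 - 1) * (1 - t) powr (real (n - i) + 1 - 1)) has_integral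
        Beta (real i + 1) (real (n - i) + 1)) {0..1}"
    by (rule has_integral_Beta_real) auto
  then have h1: "((\<lambda>t. t powr (real i) * (1 - t) powr (real (n - i))) has_integral
        Beta (real i + 1) (real (n - i) + 1)) {0<..<1}"
    by (simp add: has_integral_Icc_iff_Ioo)
  have h2: "((\<lambda>t. t ^ i * (1 - t) ^ (n - i)) has_integral
        Beta (real i + 1) (real (n - i) + 1)) {0<..<1}"
    using h1 by (subst has_integral_cong[where g="\<lambda>t. t powr (real i) * (1 - t) powr (real (n - i))"]) (auto simp: powr_realpow)
  have beta: "Beta (real i + 1) (real (n - i) + 1) = fact i * fact (n - i) / fact (Suc n)"
  proof -
    have a: "Gamma (real i + 1) = fact i" using Gamma_fact[of i] by (simp add: add.commute)
    have b: "Gamma (real (n - i) + 1) = fact (n - i)" using Gamma_fact[of "n-i"] by (simp add: add.commute)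
    have e: "real i + 1 + (real (n - i) + 1) = 1 + of_nat (Suc n)"
      using assms by (simp add: of_nat_diff)
    have c: "Gamma (real i + 1 + (real (n - i) + 1)) = fact (Suc n)"
      by (subst e) (rule Gamma_fact)
    show ?thesis unfolding Beta_def a b c by simp
  qed
  have "real (n choose i) * (fact i * fact (n - i) / fact (Suc n)) = 1 / (real n + 1)"
  proof -
    have "(fact (Suc n)::real) = (real n + 1) * fact n" by simp
    moreover have "(fact n::real) > 0" by simp
    moreover have "(fact n::real) + fact n * real n \<noteq> 0"
      by (metis add_pos_nonneg fact_gt_zero less_irrefl mult_nonneg_nonneg of_nat_0_le_iff fact_ge_zero)
    ultimately show ?thesis using assms by (simp add: binomial_fact field_simps)
  qed
  with h2 beta have "((\<lambda>t. real (n choose i) * (t ^ i * (1 - t) ^ (n - i))) has_integral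
        1 / (real n + 1)) {0<..<1}"
    by (metis has_integral_mult_right)
  then show ?thesis
    by (simp add: has_integral_Icc_iff_Ioo Bernstein_def mult.assoc)
qed

definition Qn :: "nat \<Rightarrow> (real \<Rightarrow> real) \<Rightarrow> real" where
  "Qn n F = (1 / (real n + 1)) * (\<Sum>i\<le>n. F (real i / real n))"

lemma sum_bern_sq:
  assumes "n \<ge> 1"
  shows "(\<Sum>k\<le>n. (real k / real n - x)\<^sup>2 * Bernstein n k x) = x * (1 - x) / n"
proof -
  have *: "\<And>a b x::real. (a - b)\<^sup>2 * x = a * (a - 1) * x + (1 - 2 * b) * a * x + b * b * x"
    by (simp add: algebra_simps power2_eq_square)
  have "(\<Sum>k\<le>n. (k - n * x)\<^sup>2 * Bernstein n k x) = n * x * (1 - x)"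
    apply (simp add: * sum.distrib)
    apply (simp flip: sum_distrib_left add: mult.assoc)
    apply (simp add: algebra_simps power2_eq_square)
    done
  then have "(\<Sum>k\<le>n. (k - n * x)\<^sup>2 * Bernstein n k x)/n^2 = x * (1 - x) / n"
    using assms by (simp add: power2_eq_square)
  moreover have "(\<Sum>k\<le>n. (k - n * x)\<^sup>2 * Bernstein n k x)/n^2 =
      (\<Sum>k\<le>n. (real k / real n - x)\<^sup>2 * Bernstein n k x)"
    using assms by (simp add: sum_divide_distrib field_simps power2_eq_square)
  ultimately show ?thesis by simp
qed

lemma sum_bern_lin:
  assumes "n \<ge> 1"
  shows "(\<Sum>k\<le>n. (real k / real n - x) * Bernstein n k x) = 0"
proof -
  have "(\<Sum>k\<le>n. (real k / real n - x) * Bernstein n k x) =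
     (\<Sum>k\<le>n. real k * Bernstein n k x / real n - x * Bernstein n k x)"
    by (rule sum.cong) (simp_all add: algebra_simps)
  also have "\<dots> = (\<Sum>k\<le>n. real k * Bernstein n k x) / real n - x * (\<Sum>k\<le>n. Bernstein n k x)"
    by (simp only: sum_subtractf sum_divide_distrib sum_distrib_left)
  also have "\<dots> = 0" using assms by simp
  finally show ?thesis .
qed

lemma e_bound:
  fixes F :: "real \<Rightarrow> real"
  assumes n: "n \<ge> 1" and cF: "continuous_on {0..1} F" and B: "B \<ge> 0"
    and key: "\<And>x. x \<in> {0..1} \<Longrightarrow> \<exists>l. \<forall>t\<in>{0..1}. \<bar>F t - F x - l * (t - x)\<bar> \<le> A + B * (t - x)\<^sup>2"
  shows "\<bar>integral {0..1} F - Qn n F\<bar> \<le> A + B / (6 * real n)"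
proof -
  define h where "h x = (\<Sum>i\<le>n. Bernstein n i x * (F (real i / real n) - F x))" for x
  have i1: "((\<lambda>x. \<Sum>i\<le>n. Bernstein n i x * F (real i / real n)) has_integral
          (\<Sum>i\<le>n. 1 / (real n + 1) * F (real i / real n))) {0..1}"
  proof (rule has_integral_sum)
    fix i assume "i \<in> {..n}"
    then show "((\<lambda>x. Bernstein n i x * F (real i / real n)) has_integral
          1 / (real n + 1) * F (real i / real n)) {0..1}"
      by (intro has_integral_mult_left bern_int) simp
  qed simp
  have i2: "(F has_integral integral {0..1} F) {0..1}"
    using cF by (simp add: integrable_continuous_real integrable_integral)
  have heq: "h x = (\<Sum>i\<le>n. Bernstein n i x * F (real i / real n)) - F x" for x
  proof -
    have "h x = (\<Sum>i\<le>n. Bernstein n i x * F (real i / real n)) - F x * (\<Sum>i\<le>n. Bernstein n i x)"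
      unfolding h_def right_diff_distrib sum_subtractf sum_distrib_left by (simp add: mult.commute)
    then show ?thesis by (simp only: sum_Bernstein mult_1_right)
  qed
  have ih: "(h has_integral (Qn n F - integral {0..1} F)) {0..1}"
    unfolding heq[abs_def] Qn_def
    using has_integral_diff[OF i1 i2] by (simp add: sum_distrib_left)
  define p where "p x = A + B * (x * (1 - x) / real n)" for x
  have ip: "(p has_integral (A + B / (6 * real n))) {0..1}"
  proof -
    define P where "P x = A * x + B * (x^2 / 2 - x^3 / 3) / real n" for x
    have "(p has_integral (P 1 - P 0)) {0..1}"
    proof (rule fundamental_theorem_of_calculus)
      fix x :: real
      have "(P has_real_derivative p x) (at x)"
        unfolding P_def p_def
        using n by (auto intro!: derivative_eq_intros simp: power2_eq_square algebra_simps add_divide_distrib diff_divide_distrib)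
      then show "(P has_vector_derivative p x) (at x within {0..1})"
        by (simp add: has_real_derivative_iff_has_vector_derivative has_vector_derivative_at_within)
    qed simp
    moreover have "P 1 - P 0 = A + B / (6 * real n)"
      unfolding P_def by (simp add: field_simps)
    ultimately show ?thesis by simp
  qed
  have hb: "\<bar>h x\<bar> \<le> p x" if x: "x \<in> {0..1}" for x
  proof -
    obtain l where l: "\<forall>t\<in>{0..1}. \<bar>F t - F x - l * (t - x)\<bar> \<le> A + B * (t - x)\<^sup>2"
      using key[OF x] by blast
    have "h x = (\<Sum>i\<le>n. Bernstein n i x * (F (real i / real n) - F x - l * (real i / real n - x))
                + l * ((real i / real n - x) * Bernstein n i x))"
      unfolding h_def by (rule sum.cong) (simp_all add: algebra_simps)
    also have "\<dots> = (\<Sum>i\<le>n. Bernstein n i x * (F (real i / real n) - F x - l * (real i / real n - x)))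
                + l * (\<Sum>k\<le>n. (real k / real n - x) * Bernstein n k x)"
      by (simp only: sum.distrib sum_distrib_left)
    also have "\<dots> = (\<Sum>i\<le>n. Bernstein n i x * (F (real i / real n) - F x - l * (real i / real n - x)))"
      using sum_bern_lin[OF n] by simp
    finally have "\<bar>h x\<bar> \<le> (\<Sum>i\<le>n. \<bar>Bernstein n i x * (F (real i / real n) - F x - l * (real i / real n - x))\<bar>)"
      by (simp add: sum_abs)
    also have "\<dots> \<le> (\<Sum>i\<le>n. Bernstein n i x * (A + B * (real i / real n - x)\<^sup>2))"
    proof (rule sum_mono)
      fix i assume "i \<in> {..n}"
      then have "real i / real n \<in> {0..1}" using n by auto
      then have "\<bar>F (real i / real n) - F x - l * (real i / real n - x)\<bar> \<le> A + B * (real i / real n - x)\<^sup>2"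
        using l by blast
      moreover have "Bernstein n i x \<ge> 0" using x by (simp add: Bernstein_nonneg)
      ultimately show "\<bar>Bernstein n i x * (F (real i / real n) - F x - l * (real i / real n - x))\<bar>
          \<le> Bernstein n i x * (A + B * (real i / real n - x)\<^sup>2)"
        by (simp add: abs_mult mult_left_mono)
    qed
    also have "\<dots> = A * (\<Sum>i\<le>n. Bernstein n i x) + B * (\<Sum>k\<le>n. (real k / real n - x)\<^sup>2 * Bernstein n k x)"
      unfolding sum_distrib_left sum.distrib[symmetric] by (rule sum.cong) (simp_all add: algebra_simps)
    also have "\<dots> = p x" using sum_bern_sq[OF n] by (simp add: p_def)
    finally show ?thesis .
  qed
  have le1: "Qn n F - integral {0..1} F \<le> A + B / (6 * real n)"
    by (rule has_integral_le[OF ih ip]) (use hb in force)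
  have le2: "-(A + B / (6 * real n)) \<le> Qn n F - integral {0..1} F"
    by (rule has_integral_le[OF has_integral_neg[OF ip] ih]) (use hb in force)
  show ?thesis using le1 le2 by linarith
qed

lemma integral_split_m:
  fixes f :: "real \<Rightarrow> real"
  assumes m: "m \<ge> 1" and cf: "continuous_on {0..1} f"
  shows "integral {0..1} f = (\<Sum>k=1..m. integral {(real k - 1) / m..real k / m} f)"
proof -
  have "j \<le> m \<Longrightarrow> integral {0..real j / m} f = (\<Sum>k=1..j. integral {(real k - 1) / m..real k / m} f)" for j
  proof (induction j)
    case 0
    then show ?case by simp
  next
    case (Suc j)
    have le: "real j / m \<le> real (Suc j) / m" using m by (simp add: divide_right_mono)
    have sub: "{0..real (Suc j) / m} \<subseteq> {0..1}" using Suc.prems m by (auto simp: field_simps)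
    have int: "f integrable_on {0..real (Suc j) / m}"
      by (rule integrable_continuous_real) (rule continuous_on_subset[OF cf sub])
    have "integral {0..real (Suc j) / m} f = integral {0..real j / m} f + integral {real j / m..real (Suc j) / m} f"
      using Henstock_Kurzweil_Integration.integral_combine[OF _ le int] m by simp
    also have "\<dots> = (\<Sum>k=1..Suc j. integral {(real k - 1) / m..real k / m} f)"
      using Suc by simp
    finally show ?case .
  qed
  from this[of m] m show ?thesis by simp
qed

lemma integral_panel:
  fixes f :: "real \<Rightarrow> real"
  assumes m: "m \<ge> 1" and cf: "continuous_on {0..1} f" and k: "k \<in> {1..m}"
  shows "integral {(real k - 1) / m..real k / m} f = (1 / real m) * integral {0..1} (\<lambda>y. f ((real k - 1) / m + y / m))"
proof -
  have sub: "{(real k - 1) / m..real k / m} \<subseteq> {0..1}" using k m by (auto simp: field_simps)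
  have "(f has_integral integral {(real k - 1) / m..real k / m} f) (cbox ((real k - 1) / m) (real k / m))"
    using integrable_continuous_real[OF continuous_on_subset[OF cf sub]] by (simp add: integrable_integral)
  from has_integral_affinity'[OF this, of "1 / real m" "(real k - 1) / m"] m
  have "((\<lambda>x. f ((1 / real m) * x + (real k - 1) / m)) has_integral
        (integral {(real k - 1) / m..real k / m} f * real m)) (cbox 0 1)"
    by (simp add: field_simps)
  then have "((\<lambda>y. f ((real k - 1) / m + y / m)) has_integral
        (integral {(real k - 1) / m..real k / m} f * real m)) {0..1}"
    by (simp add: add.commute)
  then have "integral {0..1} (\<lambda>y. f ((real k - 1) / m + y / m)) = integral {(real k - 1) / m..real k / m} f * real m"
    by (rule integral_unique)
  then show ?thesis using m by (simp add: field_simps)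
qed

lemma Inm_panel:
  assumes m: "m \<ge> 1" and n: "n \<ge> 1"
  shows "Inm n m f = (1 / real m) * (\<Sum>k=1..m. Qn n (\<lambda>y. f ((real k - 1) / m + y / m)))"
proof -
  have pt: "(real k * real n - real n + real i) / (real m * real n) = (real k - 1) / m + (real i / real n) / m" for k i
    using m n by (simp add: field_simps)
  show ?thesis
    unfolding Inm_def Qn_def pt sum_distrib_left
    by (rule sum.cong) (simp_all add: sum_distrib_left atMost_atLeast0)
qed

lemma panel_decomp:
  fixes f :: "real \<Rightarrow> real"
  assumes m: "m \<ge> 1" and n: "n \<ge> 1" and cf: "continuous_on {0..1} f"
  shows "integral {0..1} f - Inm n m f = (1 / real m) * (\<Sum>k=1..m.
      integral {0..1} (\<lambda>y. f ((real k - 1) / m + y / m)) - Qn n (\<lambda>y. f ((real k - 1) / m + y / m)))"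
proof -
  have "integral {0..1} f = (1 / real m) * (\<Sum>k=1..m. integral {0..1} (\<lambda>y. f ((real k - 1) / m + y / m)))"
    unfolding integral_split_m[OF m cf] sum_distrib_left
    by (rule sum.cong) (simp_all add: integral_panel[OF m cf])
  then show ?thesis
    unfolding Inm_panel[OF m n] by (simp add: sum_subtractf right_diff_distrib)
qed

lemma mvt01:
  fixes P P' :: "real \<Rightarrow> real"
  assumes ab: "a < b" "0 \<le> a" "b \<le> 1"
    and d: "\<And>z. z \<in> {0..1} \<Longrightarrow> (P has_real_derivative P' z) (at z within {0..1})"
  shows "\<exists>\<xi>. a < \<xi> \<and> \<xi> < b \<and> P b - P a = P' \<xi> * (b - a)"
proof -
  have "\<exists>x\<in>{a<..<b}. P b - P a = (*) (P' x) (b - a)"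
  proof (rule mvt_simple[OF ab(1)])
    fix x assume "a \<le> x" "x \<le> b"
    then have "x \<in> {0..1}" "{a..b} \<subseteq> {0..1}" using ab by auto
    then have "(P has_real_derivative P' x) (at x within {a..b})"
      using d DERIV_subset by blast
    then show "(P has_derivative (*) (P' x)) (at x within {a..b})"
      by (simp add: has_field_derivative_def)
  qed
  then show ?thesis by auto
qed

lemma taylor2:
  fixes g g1 g2 :: "real \<Rightarrow> real"
  assumes C: "C2_01 g g1 g2" and x: "x \<in> {0..1}" and y: "y \<in> {0..1}"
    and M: "\<And>z. z \<in> {0..1} \<Longrightarrow> \<bar>g2 z\<bar> \<le> M"
  shows "\<bar>g y - g x - g1 x * (y - x)\<bar> \<le> M / 2 * (y - x)\<^sup>2"
proof -
  have dg: "\<And>z. z \<in> {0..1} \<Longrightarrow> (g has_real_derivative g1 z) (at z within {0..1})"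
    and dg1: "\<And>z. z \<in> {0..1} \<Longrightarrow> (g1 has_real_derivative g2 z) (at z within {0..1})"
    using C unfolding C2_01_def by auto
  have gb: "\<bar>g1 b - g1 a\<bar> \<le> M * (b - a)" if "0 \<le> a" "a \<le> b" "b \<le> 1" for a b
  proof (cases "a = b")
    case True then show ?thesis by simp
  next
    case False
    with that have "a < b" by simp
    from mvt01[OF this that(1,3) dg1] obtain \<xi> where
      \<xi>: "a < \<xi>" "\<xi> < b" "g1 b - g1 a = g2 \<xi> * (b - a)" by blast
    have "\<bar>g2 \<xi>\<bar> \<le> M" using M \<xi> that by auto
    then show ?thesis using \<xi> \<open>a < b\<close> by (simp add: abs_mult mult_right_mono)
  qed
  define Phi where "Phi s z = g z - g x - g1 x * (z - x) - s * M / 2 * (z - x)\<^sup>2" for s z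
  have dPhi: "(Phi s has_real_derivative (g1 z - g1 x - s * M * (z - x))) (at z within {0..1})"
    if "z \<in> {0..1}" for s z
    unfolding Phi_def
    by (rule derivative_eq_intros refl dg[OF that] | simp add: algebra_simps)+
  have Phi0: "Phi s x = 0" for s by (simp add: Phi_def)
  show ?thesis
  proof (cases "x = y")
    case True then show ?thesis by simp
  next
    case False
    show ?thesis
    proof (cases "x < y")
      case True
      obtain \<xi>1 where \<xi>1: "x < \<xi>1" "\<xi>1 < y" "Phi 1 y - Phi 1 x = (g1 \<xi>1 - g1 x - 1 * M * (\<xi>1 - x)) * (y - x)"
        using mvt01[OF True _ _ dPhi, of 1] x y by auto
      obtain \<xi>2 where \<xi>2: "x < \<xi>2" "\<xi>2 < y" "Phi (-1) y - Phi (-1) x = (g1 \<xi>2 - g1 x - (-1) * M * (\<xi>2 - x)) * (y - x)"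
        using mvt01[OF True _ _ dPhi, of "-1"] x y by auto
      have "\<bar>g1 \<xi>1 - g1 x\<bar> \<le> M * (\<xi>1 - x)" using gb[of x \<xi>1] \<xi>1 x y by auto
      then have "Phi 1 y \<le> 0" using \<xi>1 Phi0 True by (simp add: mult_nonpos_nonneg)
      moreover have "\<bar>g1 \<xi>2 - g1 x\<bar> \<le> M * (\<xi>2 - x)" using gb[of x \<xi>2] \<xi>2 x y by auto
      then have "Phi (-1) y \<ge> 0" using \<xi>2 Phi0 True by simp
      ultimately show ?thesis unfolding Phi_def abs_le_iff by (simp add: algebra_simps)
    next
      case False
      then have yx: "y < x" using \<open>x \<noteq> y\<close> by simp
      obtain \<xi>1 where \<xi>1: "y < \<xi>1" "\<xi>1 < x" "Phi 1 x - Phi 1 y = (g1 \<xi>1 - g1 x - 1 * M * (\<xi>1 - x)) * (x - y)"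
        using mvt01[OF yx _ _ dPhi, of 1] x y by auto
      obtain \<xi>2 where \<xi>2: "y < \<xi>2" "\<xi>2 < x" "Phi (-1) x - Phi (-1) y = (g1 \<xi>2 - g1 x - (-1) * M * (\<xi>2 - x)) * (x - y)"
        using mvt01[OF yx _ _ dPhi, of "-1"] x y by auto
      have "\<bar>g1 x - g1 \<xi>1\<bar> \<le> M * (x - \<xi>1)" using gb[of \<xi>1 x] \<xi>1 x y by auto
      then have "g1 \<xi>1 - g1 x - 1 * M * (\<xi>1 - x) \<ge> 0" by (simp add: abs_le_iff algebra_simps)
      then have "(g1 \<xi>1 - g1 x - 1 * M * (\<xi>1 - x)) * (x - y) \<ge> 0" using yx by simp
      then have "Phi 1 y \<le> 0" using \<xi>1(3) Phi0[of 1] by linarith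
      moreover have "\<bar>g1 x - g1 \<xi>2\<bar> \<le> M * (x - \<xi>2)" using gb[of \<xi>2 x] \<xi>2 x y by auto
      then have "g1 \<xi>2 - g1 x - (-1) * M * (\<xi>2 - x) \<le> 0" by (simp add: abs_le_iff algebra_simps)
      then have "(g1 \<xi>2 - g1 x - (-1) * M * (\<xi>2 - x)) * (x - y) \<le> 0" using yx by (simp add: mult_nonpos_nonneg)
      then have "Phi (-1) y \<ge> 0" using \<xi>2(3) Phi0[of "-1"] by linarith
      ultimately show ?thesis unfolding Phi_def abs_le_iff by (simp add: algebra_simps)
    qed
  qed
qed

lemma sup01:
  assumes "continuous_on {0..1} h" "x \<in> {0..1}"
  shows "\<bar>h x\<bar> \<le> supnorm01 h"
proof -
  have "compact ((\<lambda>x. \<bar>h x\<bar>) ` {0..1})"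
    by (rule compact_continuous_image) (auto intro: continuous_intros assms(1))
  then have "bdd_above ((\<lambda>x. \<bar>h x\<bar>) ` {0..1})"
    by (simp add: bounded_imp_bdd_above compact_imp_bounded)
  then show ?thesis unfolding supnorm01_def by (rule cSUP_upper[OF assms(2)])
qed

lemma supnorm01_nonneg:
  assumes "continuous_on {0..1} h"
  shows "0 \<le> supnorm01 h"
  using sup01[OF assms, of 0] by simp

lemma panel_pt:
  fixes m k :: nat
  assumes m: "m \<ge> 1" and k: "k \<in> {1..m}" and y: "y \<in> {0..1::real}"
  shows "(real k - 1) / m + y / m \<in> {0..1}"
proof -
  have "0 \<le> (real k - 1) / m" using k by auto
  moreover have "0 \<le> y / m" using y by auto
  moreover have "(real k - 1) / m + y / m = (real k - 1 + y) / m" by (simp add: add_divide_distrib)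
  moreover have "(real k - 1 + y) \<le> m" using k y by auto
  ultimately show ?thesis using m by (auto simp: divide_le_eq)
qed

lemma panel_cont:
  fixes m k :: nat
  assumes m: "m \<ge> 1" and k: "k \<in> {1..m}" and cf: "continuous_on {0..1} f"
  shows "continuous_on {0..1} (\<lambda>y. f ((real k - 1) / m + y / m))"
proof -
  have "continuous_on {0..1} (\<lambda>y. (real k - 1) / m + y / m)" using m by (intro continuous_intros) auto
  moreover have "(\<lambda>y. (real k - 1) / m + y / m) ` {0..1} \<subseteq> {0..1}" using panel_pt[OF m k] by auto
  ultimately show ?thesis using continuous_on_compose2[OF cf] by blast
qed

lemma e_small:
  fixes U :: "real \<Rightarrow> real" and S :: real
  assumes cU: "continuous_on {0..1} U" and S: "\<And>y. y \<in> {0..1} \<Longrightarrow> \<bar>U y\<bar> \<le> S"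
  shows "\<bar>integral {0..1} U - Qn n U\<bar> \<le> 2 * S"
proof -
  have iU: "(U has_integral integral {0..1} U) {0..1}"
    using cU by (simp add: integrable_continuous_real integrable_integral)
  have c1: "((\<lambda>y::real. S) has_integral S) {0..1::real}" using has_integral_const_real[of S "0::real" 1] by simp
  have c2: "((\<lambda>y::real. - S) has_integral - S) {0..1::real}" using has_integral_const_real[of "-S" "0::real" 1] by simp
  have "integral {0..1} U \<le> S" by (rule has_integral_le[OF iU c1]) (use S in force)
  moreover have "- S \<le> integral {0..1} U" by (rule has_integral_le[OF c2 iU]) (use S in force)
  moreover have "\<bar>Qn n U\<bar> \<le> S"
  proof -
    have "\<bar>\<Sum>i\<le>n. U (real i / real n)\<bar> \<le> (\<Sum>i\<le>n. S)"
      by (rule order_trans[OF sum_abs sum_mono]) (rule S, auto simp: divide_le_eq)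
    then have "\<bar>\<Sum>i\<le>n. U (real i / real n)\<bar> / (real n + 1) \<le> S" by (simp add: divide_le_eq algebra_simps)
    then show ?thesis unfolding Qn_def by (simp add: abs_mult)
  qed
  ultimately show ?thesis by linarith
qed

lemma Qn_diff: "Qn n (\<lambda>y. F y - G y) = Qn n F - Qn n G"
  unfolding Qn_def by (simp add: sum_subtractf right_diff_distrib)

lemma part_i_single:
  fixes f g g1 g2 :: "real \<Rightarrow> real"
  assumes m: "m \<ge> 1" and n: "n \<ge> 1" and cf: "continuous_on {0..1} f" and C: "C2_01 g g1 g2"
  shows "\<bar>integral {0..1} f - Inm n m f\<bar> \<le>
     2 * (supnorm01 (\<lambda>x. f x - g x) + 1 / (24 * (real m)^2 * real n) * supnorm01 g2)"
proof -
  have cg: "continuous_on {0..1} g"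
    by (rule DERIV_continuous_on) (use C in \<open>auto simp: C2_01_def\<close>)
  have cg2: "continuous_on {0..1} g2" using C by (simp add: C2_01_def)
  define S where "S = supnorm01 (\<lambda>x. f x - g x)"
  define M where "M = supnorm01 g2"
  have cfg: "continuous_on {0..1} (\<lambda>x. f x - g x)" by (intro continuous_intros cf cg)
  have M0: "M \<ge> 0" unfolding M_def by (rule supnorm01_nonneg[OF cg2])
  have Mb: "\<And>z. z \<in> {0..1} \<Longrightarrow> \<bar>g2 z\<bar> \<le> M" unfolding M_def by (rule sup01[OF cg2])
  have Sb: "\<And>z. z \<in> {0..1} \<Longrightarrow> \<bar>f z - g z\<bar> \<le> S" unfolding S_def using sup01[OF cfg] by blast
  define F where "F k y = f ((real k - 1) / m + y / m)" for k y
  define G where "G k y = g ((real k - 1) / m + y / m)" for k y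
  have each: "\<bar>integral {0..1} (F k) - Qn n (F k)\<bar> \<le> 2 * S + M / (12 * (real m)^2 * real n)"
    if k: "k \<in> {1..m}" for k
  proof -
    have cF: "continuous_on {0..1} (F k)" unfolding F_def by (rule panel_cont[OF m k cf])
    have cG: "continuous_on {0..1} (G k)" unfolding G_def by (rule panel_cont[OF m k cg])
    have iF: "F k integrable_on {0..1}" "G k integrable_on {0..1}"
      using cF cG by (simp_all add: integrable_continuous_real)
    have split: "integral {0..1} (F k) - Qn n (F k) =
        (integral {0..1} (\<lambda>y. F k y - G k y) - Qn n (\<lambda>y. F k y - G k y)) + (integral {0..1} (G k) - Qn n (G k))"
      using iF by (simp add: Qn_diff integral_diff)
    have e1: "\<bar>integral {0..1} (\<lambda>y. F k y - G k y) - Qn n (\<lambda>y. F k y - G k y)\<bar> \<le> 2 * S"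
    proof (rule e_small)
      show "continuous_on {0..1} (\<lambda>y. F k y - G k y)" by (intro continuous_intros cF cG)
      fix y :: real assume "y \<in> {0..1}"
      then show "\<bar>F k y - G k y\<bar> \<le> S" unfolding F_def G_def using Sb panel_pt[OF m k] by blast
    qed
    have e2: "\<bar>integral {0..1} (G k) - Qn n (G k)\<bar> \<le> 0 + M / (2 * (real m)^2) / (6 * real n)"
    proof (rule e_bound[OF n cG])
      show "0 \<le> M / (2 * (real m)^2)" using M0 by simp
      fix x :: real assume x: "x \<in> {0..1}"
      show "\<exists>l. \<forall>t\<in>{0..1}. \<bar>G k t - G k x - l * (t - x)\<bar> \<le> 0 + M / (2 * (real m)^2) * (t - x)\<^sup>2"
      proof (intro exI ballI)
        fix t :: real assume t: "t \<in> {0..1}"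
        define u where "u = (real k - 1) / m + t / m"
        define v where "v = (real k - 1) / m + x / m"
        have uv: "u - v = (t - x) / m" unfolding u_def v_def by (simp add: diff_divide_distrib)
        have "\<bar>g u - g v - g1 v * (u - v)\<bar> \<le> M / 2 * (u - v)\<^sup>2"
          unfolding u_def v_def using taylor2[OF C panel_pt[OF m k x] panel_pt[OF m k t] Mb] by blast
        moreover have "g1 v * (u - v) = (g1 v / m) * (t - x)" unfolding uv by simp
        moreover have "M / 2 * (u - v)\<^sup>2 = 0 + M / (2 * (real m)^2) * (t - x)\<^sup>2"
          unfolding uv by (simp add: power_divide)
        ultimately show "\<bar>G k t - G k x - (g1 ((real k - 1) / m + x / m) / m) * (t - x)\<bar>
              \<le> 0 + M / (2 * (real m)^2) * (t - x)\<^sup>2"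
          unfolding G_def u_def[symmetric] v_def[symmetric] by simp
      qed
    qed
    have "M / (2 * (real m)^2) / (6 * real n) = M / (12 * (real m)^2 * real n)" by simp
    then show ?thesis using split e1 e2 by linarith
  qed
  have "\<bar>integral {0..1} f - Inm n m f\<bar> = \<bar>1 / real m * (\<Sum>k=1..m. integral {0..1} (F k) - Qn n (F k))\<bar>"
    using panel_decomp[OF m n cf] unfolding F_def by simp
  also have "\<dots> \<le> 1 / real m * (\<Sum>k=1..m. \<bar>integral {0..1} (F k) - Qn n (F k)\<bar>)"
    unfolding abs_mult by (rule mult_mono) (auto intro: sum_abs)
  also have "\<dots> \<le> 1 / real m * (\<Sum>k=1..m. 2 * S + M / (12 * (real m)^2 * real n))"
    by (rule mult_left_mono[OF sum_mono]) (use each in auto)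
  also have "\<dots> = 2 * (S + 1 / (24 * (real m)^2 * real n) * M)"
    using m by simp
  finally show ?thesis unfolding S_def M_def .
qed

definition DH :: "(real \<Rightarrow> real) \<Rightarrow> real \<Rightarrow> real \<Rightarrow> bool" where
  "DH F \<tau> W \<longleftrightarrow> (\<forall>y s. y - s \<in> {0..1} \<and> y + s \<in> {0..1} \<and> \<bar>s\<bar> \<le> \<tau> \<longrightarrow>
      \<bar>F (y - s) - 2 * F y + F (y + s)\<bar> \<le> W)"

lemma aux_half: "\<And>X Y Z W::real. X = - Y / 2 + Z / 2 \<Longrightarrow> \<bar>Y\<bar> \<le> W \<Longrightarrow> \<bar>Z\<bar> \<le> W \<Longrightarrow> \<bar>X\<bar> \<le> W"
  by linarith

lemma DH_W_nonneg: "DH F \<tau> W \<Longrightarrow> 0 \<le> \<tau> \<Longrightarrow> 0 \<le> W"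
  unfolding DH_def by (erule allE[of _ 0], erule allE[of _ 0]) simp

lemma DH_D: "DH F \<tau> W \<Longrightarrow> y - s \<in> {0..1} \<Longrightarrow> y + s \<in> {0..1} \<Longrightarrow> \<bar>s\<bar> \<le> \<tau> \<Longrightarrow>
      \<bar>F (y - s) - 2 * F y + F (y + s)\<bar> \<le> W"
  unfolding DH_def by blast

lemma DH_refl: 
  assumes "DH F \<tau> W" shows "DH (\<lambda>y. F (1 - y)) \<tau> W"
  unfolding DH_def
proof (intro allI impI)
  fix y s :: real assume a: "y - s \<in> {0..1} \<and> y + s \<in> {0..1} \<and> \<bar>s\<bar> \<le> \<tau>"
  have "\<bar>F ((1 - y) - (- s)) - 2 * F (1 - y) + F ((1 - y) + (- s))\<bar> \<le> W"
    by (rule DH_D[OF assms]) (use a in auto)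
  then show "\<bar>F (1 - (y - s)) - 2 * F (1 - y) + F (1 - (y + s))\<bar> \<le> W"
    by (simp add: algebra_simps)
qed

lemma conv01:
  fixes a b u :: real
  assumes "a \<in> {0..1}" "b \<in> {0..1}" "u \<in> {0..1}"
  shows "a + u * (b - a) \<in> {0..1}"
proof -
  have e: "a + u * (b - a) = (1 - u) * a + u * b" by (simp add: algebra_simps)
  have "0 \<le> (1 - u) * a + u * b" using assms by auto
  moreover have "(1 - u) * a + u * b \<le> (1 - u) * 1 + u * 1"
    using assms by (intro add_mono mult_left_mono) auto
  ultimately show ?thesis unfolding e by auto
qed

lemma chord_half_step:
  fixes F :: "real \<Rightarrow> real"
  assumes H: "DH F \<tau> W" and a: "a \<in> {0..1}" and b: "b \<in> {0..1}" and ab: "\<bar>b - a\<bar> \<le> 2 * \<tau>"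
    and r: "0 \<le> r" "2 * r \<le> 1"
    and IH: "\<bar>F (a + (2 * r) * (b - a)) - (1 - 2 * r) * F a - (2 * r) * F b\<bar> \<le> W"
  shows "\<bar>F (a + r * (b - a)) - (1 - r) * F a - r * F b\<bar> \<le> W"
proof -
  define c where "c = a + r * (b - a)"
  define s where "s = r * (b - a)"
  have "\<bar>F (c - s) - 2 * F c + F (c + s)\<bar> \<le> W"
  proof (rule DH_D[OF H])
    show "c - s \<in> {0..1}" using a by (simp add: c_def s_def)
    have "c + s = a + (2 * r) * (b - a)" by (simp add: c_def s_def algebra_simps)
    then show "c + s \<in> {0..1}" using conv01[OF a b, of "2 * r"] r by simp
    have "\<bar>s\<bar> = r * \<bar>b - a\<bar>" using r by (simp add: s_def abs_mult)
    also have "\<dots> \<le> r * (2 * \<tau>)" using r ab by (simp add: mult_left_mono)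
    also have "\<dots> \<le> \<tau>"
    proof -
      have "0 \<le> \<tau>" using ab by linarith
      then have "(2 * r) * \<tau> \<le> 1 * \<tau>" using r by (intro mult_right_mono) auto
      then show ?thesis by (simp add: algebra_simps)
    qed
    finally show "\<bar>s\<bar> \<le> \<tau>" .
  qed
  moreover have "c - s = a" by (simp add: c_def s_def)
  moreover have "c + s = a + (2 * r) * (b - a)" by (simp add: c_def s_def algebra_simps)
  ultimately have D: "\<bar>F a - 2 * F (a + r * (b - a)) + F (a + (2 * r) * (b - a))\<bar> \<le> W"
    unfolding c_def by metis
  have "F (a + r * (b - a)) - (1 - r) * F a - r * F b =
        - (F a - 2 * F (a + r * (b - a)) + F (a + (2 * r) * (b - a))) / 2
        + (F (a + (2 * r) * (b - a)) - (1 - 2 * r) * F a - (2 * r) * F b) / 2"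
  proof -
    have id: "\<And>P Q A B::real. P - (1 - r) * A - r * B = - (A - 2 * P + Q) / 2 + (Q - (1 - 2 * r) * A - (2 * r) * B) / 2"
      by (simp add: field_simps)
    show ?thesis by (rule id)
  qed
  then show ?thesis using D IH by (rule aux_half)
qed

lemma chord_dyadic:
  fixes F :: "real \<Rightarrow> real"
  assumes H: "DH F \<tau> W" and t0: "0 \<le> \<tau>"
  shows "\<forall>j a b. j \<le> 2 ^ k \<longrightarrow> a \<in> {0..1} \<longrightarrow> b \<in> {0..1} \<longrightarrow> \<bar>b - a\<bar> \<le> 2 * \<tau> \<longrightarrow>
     \<bar>F (a + (real j / 2 ^ k) * (b - a)) - (1 - real j / 2 ^ k) * F a - (real j / 2 ^ k) * F b\<bar> \<le> W"
proof (induction k)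
  case 0
  have W0: "0 \<le> W" by (rule DH_W_nonneg[OF H t0])
  show ?case
  proof (intro allI impI)
    fix j :: nat and a b :: real assume "j \<le> 2 ^ 0"
    then have "j = 0 \<or> j = 1" by auto
    then show "\<bar>F (a + (real j / 2 ^ 0) * (b - a)) - (1 - real j / 2 ^ 0) * F a - (real j / 2 ^ 0) * F b\<bar> \<le> W"
      using W0 by auto
  qed
next
  case (Suc k)
  have half: "\<bar>F (a + (real j / 2 ^ Suc k) * (b - a)) - (1 - real j / 2 ^ Suc k) * F a - (real j / 2 ^ Suc k) * F b\<bar> \<le> W"
    if j: "2 * j \<le> 2 ^ Suc k" and a: "a \<in> {0..1}" and b: "b \<in> {0..1}" and ab: "\<bar>b - a\<bar> \<le> 2 * \<tau>" for j a b
  proof (rule chord_half_step[OF H a b ab])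
    show "0 \<le> real j / 2 ^ Suc k" by simp
    have "real (2 * j) \<le> 2 ^ Suc k" using j by (metis of_nat_le_iff of_nat_numeral of_nat_power)
    then show "2 * (real j / 2 ^ Suc k) \<le> 1" by (simp add: field_simps)
    have jk: "j \<le> 2 ^ k" using j by simp
    have e: "2 * (real j / 2 ^ Suc k) = real j / 2 ^ k" by simp
    show "\<bar>F (a + 2 * (real j / 2 ^ Suc k) * (b - a)) - (1 - 2 * (real j / 2 ^ Suc k)) * F a -
          2 * (real j / 2 ^ Suc k) * F b\<bar> \<le> W"
      unfolding e using Suc.IH jk a b ab by blast
  qed
  show ?case
  proof (intro allI impI)
    fix j :: nat and a b :: real
    assume j: "j \<le> 2 ^ Suc k" and a: "a \<in> {0..1}" and b: "b \<in> {0..1}" and ab: "\<bar>b - a\<bar> \<le> 2 * \<tau>"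
    show "\<bar>F (a + (real j / 2 ^ Suc k) * (b - a)) - (1 - real j / 2 ^ Suc k) * F a - (real j / 2 ^ Suc k) * F b\<bar> \<le> W"
    proof (cases "2 * j \<le> 2 ^ Suc k")
      case True
      then show ?thesis using half a b ab by blast
    next
      case False
      define j' where "j' = 2 ^ Suc k - j"
      have j'le: "2 * j' \<le> 2 ^ Suc k" using False j unfolding j'_def by simp
      have ba: "\<bar>a - b\<bar> \<le> 2 * \<tau>" using ab by simp
      have h: "\<bar>F (b + (real j' / 2 ^ Suc k) * (a - b)) - (1 - real j' / 2 ^ Suc k) * F b - (real j' / 2 ^ Suc k) * F a\<bar> \<le> W"
        by (rule half[OF j'le b a ba])
      have rj: "real j' / 2 ^ Suc k = 1 - real j / 2 ^ Suc k"
        using j unfolding j'_def by (simp add: of_nat_diff field_simps)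
      have pe0: "\<And>r::real. b + (1 - r) * (a - b) = a + r * (b - a)" by (simp add: algebra_simps)
      have pe: "b + (1 - real j / 2 ^ Suc k) * (a - b) = a + (real j / 2 ^ Suc k) * (b - a)"
        by (rule pe0)
      have h': "\<bar>F (a + (real j / 2 ^ Suc k) * (b - a)) - (1 - (1 - real j / 2 ^ Suc k)) * F b
                - (1 - real j / 2 ^ Suc k) * F a\<bar> \<le> W"
        using h unfolding rj pe .
      have "F (a + (real j / 2 ^ Suc k) * (b - a)) - (1 - real j / 2 ^ Suc k) * F a - (real j / 2 ^ Suc k) * F b
          = F (a + (real j / 2 ^ Suc k) * (b - a)) - (1 - (1 - real j / 2 ^ Suc k)) * F b
                - (1 - real j / 2 ^ Suc k) * F a" by simp
      then show ?thesis using h' by simp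
    qed
  qed
qed



lemma chord_all:
  fixes F :: "real \<Rightarrow> real"
  assumes H: "DH F \<tau> W" and t0: "0 \<le> \<tau>" and cF: "continuous_on {0..1} F"
    and a: "a \<in> {0..1}" and b: "b \<in> {0..1}" and ab: "\<bar>b - a\<bar> \<le> 2 * \<tau>" and r: "r \<in> {0..1}"
  shows "\<bar>F (a + r * (b - a)) - (1 - r) * F a - r * F b\<bar> \<le> W"
proof -
  define \<phi> where "\<phi> u = F (a + u * (b - a)) - (1 - u) * F a - u * F b" for u
  have c\<phi>: "continuous_on {0..1} \<phi>"
  proof -
    have "continuous_on {0..1} (\<lambda>u. a + u * (b - a))" by (intro continuous_intros)
    moreover have "(\<lambda>u. a + u * (b - a)) ` {0..1} \<subseteq> {0..1}" using conv01[OF a b] by auto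
    ultimately have "continuous_on {0..1} (\<lambda>u. F (a + u * (b - a)))"
      using continuous_on_compose2[OF cF] by blast
    then show ?thesis unfolding \<phi>_def by (intro continuous_intros)
  qed
  define j where "j k = nat \<lfloor>2 ^ k * r\<rfloor>" for k :: nat
  define rk where "rk k = real (j k) / 2 ^ k" for k :: nat
  have fl: "real (j k) = of_int \<lfloor>2 ^ k * r\<rfloor>" for k
    unfolding j_def using r by simp
  have rk_le: "rk k \<le> r" for k
  proof -
    have "real (j k) \<le> 2 ^ k * r" unfolding fl by linarith
    then show ?thesis unfolding rk_def by (simp add: divide_le_eq mult.commute)
  qed
  have rk_ge: "r - (1/2) ^ k \<le> rk k" for k
  proof -
    have "2 ^ k * r - 1 \<le> real (j k)" unfolding fl by linarith
    then have "(2 ^ k * r - 1) / 2 ^ k \<le> real (j k) / 2 ^ k" by (simp add: divide_right_mono)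
    then show ?thesis unfolding rk_def by (simp add: field_simps power_divide)
  qed
  have jk: "j k \<le> 2 ^ k" for k
  proof -
    have "2 ^ k * r \<le> 2 ^ k" using r by auto
    then have "\<lfloor>2 ^ k * r\<rfloor> \<le> 2 ^ k" by (metis floor_le_numeral floor_mono floor_of_nat of_nat_numeral of_nat_power)
    then show ?thesis unfolding j_def by (simp add: nat_le_iff)
  qed
  have rk01: "rk k \<in> {0..1}" for k
  proof -
    have "real (j k) \<le> 2 ^ k" using jk[of k] by (metis of_nat_le_iff of_nat_numeral of_nat_power)
    then show ?thesis unfolding rk_def by (auto simp: divide_le_eq)
  qed
  have lim: "rk \<longlonglongrightarrow> r"
  proof (rule real_tendsto_sandwich[where f="\<lambda>k. r - (1/2) ^ k" and h="\<lambda>k. r"])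
    show "\<forall>\<^sub>F k in sequentially. r - (1/2) ^ k \<le> rk k" using rk_ge by simp
    show "\<forall>\<^sub>F k in sequentially. rk k \<le> r" using rk_le by simp
    have "(\<lambda>k. (1/2::real) ^ k) \<longlonglongrightarrow> 0" by (rule LIMSEQ_power_zero) simp
    then show "(\<lambda>k. r - (1/2) ^ k) \<longlonglongrightarrow> r" using tendsto_diff[OF tendsto_const[of r]] by fastforce
  qed simp
  have "(\<lambda>k. \<phi> (rk k)) \<longlonglongrightarrow> \<phi> r"
    by (rule continuous_on_tendsto_compose[OF c\<phi> lim r]) (use rk01 in simp)
  then have l2: "(\<lambda>k. \<bar>\<phi> (rk k)\<bar>) \<longlonglongrightarrow> \<bar>\<phi> r\<bar>" by (rule tendsto_rabs)
  have bnd: "\<bar>\<phi> (rk k)\<bar> \<le> W" for k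
    using chord_dyadic[OF H t0, of k] jk a b ab unfolding \<phi>_def rk_def by blast
  have "\<bar>\<phi> r\<bar> \<le> W" by (rule LIMSEQ_le_const2[OF l2]) (use bnd in auto)
  then show ?thesis unfolding \<phi>_def .
qed

lemma tele:
  fixes F :: "real \<Rightarrow> real"
  assumes H: "DH F \<tau> W" and t0: "0 < \<tau>" and x: "0 \<le> x"
  shows "x + (real j + 1) * \<tau> \<le> 1 \<Longrightarrow>
    \<bar>F (x + (real j + 1) * \<tau>) - F (x + real j * \<tau>) - (F (x + \<tau>) - F x)\<bar> \<le> real j * W \<and>
    \<bar>F (x + (real j + 1) * \<tau>) - F x - (real j + 1) * (F (x + \<tau>) - F x)\<bar> \<le> (real j + 1) * real j / 2 * W"
proof (induction j)
  case 0
  then show ?case by simp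
next
  case (Suc j)
  have le: "x + (real j + 1) * \<tau> \<le> 1" using Suc.prems t0 by (simp add: algebra_simps)
  note IH = Suc.IH[OF le]
  have e2: "x + real (Suc j) * \<tau> - \<tau> = x + real j * \<tau>" by (simp add: algebra_simps)
  have e3: "x + real (Suc j) * \<tau> + \<tau> = x + (real (Suc j) + 1) * \<tau>" by (simp add: algebra_simps)
  have "\<bar>F (x + real (Suc j) * \<tau> - \<tau>) - 2 * F (x + real (Suc j) * \<tau>) + F (x + real (Suc j) * \<tau> + \<tau>)\<bar> \<le> W"
  proof (rule DH_D[OF H])
    show "x + real (Suc j) * \<tau> - \<tau> \<in> {0..1}" unfolding e2 using x t0 le by (auto simp: algebra_simps)
    show "x + real (Suc j) * \<tau> + \<tau> \<in> {0..1}" unfolding e3 using x t0 Suc.prems by (auto simp: algebra_simps)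
  qed (use t0 in simp)
  then have D: "\<bar>F (x + real j * \<tau>) - 2 * F (x + real (Suc j) * \<tau>) + F (x + (real (Suc j) + 1) * \<tau>)\<bar> \<le> W"
    unfolding e2 e3 .
  have e1: "x + (real j + 1) * \<tau> = x + real (Suc j) * \<tau>" by simp
  have A: "\<bar>F (x + (real (Suc j) + 1) * \<tau>) - F (x + real (Suc j) * \<tau>) - (F (x + \<tau>) - F x)\<bar> \<le> real (Suc j) * W"
  proof -
    have "F (x + (real (Suc j) + 1) * \<tau>) - F (x + real (Suc j) * \<tau>) - (F (x + \<tau>) - F x) =
      (F (x + real (Suc j) * \<tau>) - F (x + real j * \<tau>) - (F (x + \<tau>) - F x)) +
      (F (x + real j * \<tau>) - 2 * F (x + real (Suc j) * \<tau>) + F (x + (real (Suc j) + 1) * \<tau>))"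
      by simp
    then show ?thesis using IH D unfolding e1 by (simp add: algebra_simps) linarith
  qed
  have B: "\<bar>F (x + (real (Suc j) + 1) * \<tau>) - F x - (real (Suc j) + 1) * (F (x + \<tau>) - F x)\<bar>
      \<le> (real (Suc j) + 1) * real (Suc j) / 2 * W"
  proof -
    have "F (x + (real (Suc j) + 1) * \<tau>) - F x - (real (Suc j) + 1) * (F (x + \<tau>) - F x) =
      (F (x + real (Suc j) * \<tau>) - F x - (real j + 1) * (F (x + \<tau>) - F x)) +
      (F (x + (real (Suc j) + 1) * \<tau>) - F (x + real (Suc j) * \<tau>) - (F (x + \<tau>) - F x))"
      by (simp add: algebra_simps)
    moreover have "(real j + 1) * real j / 2 * W + real (Suc j) * W = (real (Suc j) + 1) * real (Suc j) / 2 * W"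
      by (simp add: algebra_simps)
    ultimately show ?thesis using IH A unfolding e1 by linarith
  qed
  show ?case using A B by blast
qed

lemma right_bound0:
  fixes F :: "real \<Rightarrow> real"
  assumes H: "DH F \<tau> W" and t0: "0 < \<tau>" and cF: "continuous_on {0..1} F"
    and x: "0 \<le> x" "x + \<tau> \<le> 1" and t: "x \<le> t" "t \<le> 1"
  shows "\<bar>F t - F x - ((t - x) / \<tau>) * (F (x + \<tau>) - F x)\<bar> \<le> W * (1 + ((t - x) / \<tau>)\<^sup>2 / 2)"
proof -
  have W0: "0 \<le> W" using DH_W_nonneg[OF H] t0 by simp
  define s where "s = (t - x) / \<tau>"
  have s0: "0 \<le> s" unfolding s_def using t t0 by simp
  define q where "q = nat \<lfloor>s\<rfloor>"
  define \<rho> where "\<rho> = s - real q"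
  have qs: "real q = of_int \<lfloor>s\<rfloor>" unfolding q_def using s0 by simp
  have \<rho>0: "0 \<le> \<rho>" "\<rho> < 1" unfolding \<rho>_def qs by linarith+
  have tq: "t = x + (real q + \<rho>) * \<tau>" unfolding \<rho>_def s_def using t0 by simp
  show ?thesis
  proof (cases q)
    case 0
    then have tr: "t = x + \<rho> * ((x + \<tau>) - x)" using tq by simp
    have "\<bar>F (x + \<rho> * ((x + \<tau>) - x)) - (1 - \<rho>) * F x - \<rho> * F (x + \<tau>)\<bar> \<le> W"
      by (rule chord_all[OF H _ cF]) (use x t0 \<rho>0 in auto)
    moreover have "s = \<rho>" using 0 by (simp add: \<rho>_def)
    moreover have Wn: "0 \<le> W * \<rho>\<^sup>2 / 2" using W0 by simp
    ultimately show ?thesis unfolding s_def[symmetric] tr[symmetric] by (simp add: algebra_simps) (use Wn in linarith)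
  next
    case (Suc j)
    have pq: "x + (real j + 1) * \<tau> \<le> 1"
    proof -
      have "x + (real j + 1) * \<tau> \<le> t" using tq Suc \<rho>0 t0 by simp
      then show ?thesis using t by simp
    qed
    from tele[OF H t0 x(1) pq] have
      D: "\<bar>F (x + (real j + 1) * \<tau>) - F (x + real j * \<tau>) - (F (x + \<tau>) - F x)\<bar> \<le> real j * W" and
      T: "\<bar>F (x + (real j + 1) * \<tau>) - F x - (real j + 1) * (F (x + \<tau>) - F x)\<bar> \<le> (real j + 1) * real j / 2 * W"
      by auto
    define a where "a = x + real j * \<tau>"
    define \<theta> where "\<theta> = 1 / (1 + \<rho>)"
    have ta: "t - a = (1 + \<rho>) * \<tau>" unfolding a_def using tq Suc by (simp add: algebra_simps)
    have "\<theta> * (t - a) = \<tau>" unfolding ta \<theta>_def using \<rho>0 by simp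
    then have pt: "a + \<theta> * (t - a) = x + (real j + 1) * \<tau>"
      unfolding a_def by (simp add: algebra_simps)
    have a01: "a \<in> {0..1}" unfolding a_def using x t0 pq by (auto simp: algebra_simps)
    have "\<bar>F (a + \<theta> * (t - a)) - (1 - \<theta>) * F a - \<theta> * F t\<bar> \<le> W"
    proof (rule chord_all[OF H _ cF a01])
      show "t \<in> {0..1}" using t x by auto
      show "\<bar>t - a\<bar> \<le> 2 * \<tau>" unfolding ta using \<rho>0 t0 by (simp add: abs_mult)
      show "\<theta> \<in> {0..1}" unfolding \<theta>_def using \<rho>0 by auto
    qed (use t0 in simp)
    then have C: "\<bar>F (x + (real j + 1) * \<tau>) - (1 - \<theta>) * F a - \<theta> * F t\<bar> \<le> W" unfolding pt .
    define P where "P = F (x + (real j + 1) * \<tau>)"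
    define dev where "dev = P - (1 - \<theta>) * F a - \<theta> * F t"
    have devid: "(1 + \<rho>) * dev = (1 + \<rho>) * P - \<rho> * F a - F t"
    proof -
      have h1: "(1 + \<rho>) * (1 - \<theta>) = \<rho>" unfolding \<theta>_def using \<rho>0 by (simp add: field_simps)
      have h2: "(1 + \<rho>) * \<theta> = 1" unfolding \<theta>_def using \<rho>0 by simp
      have "(1 + \<rho>) * dev = (1 + \<rho>) * P - ((1 + \<rho>) * (1 - \<theta>)) * F a - ((1 + \<rho>) * \<theta>) * F t"
        unfolding dev_def by algebra
      then show ?thesis unfolding h1 h2 by simp
    qed
    have sq: "s = real j + 1 + \<rho>" unfolding \<rho>_def using Suc by simp
    have key: "F t - F x - s * (F (x + \<tau>) - F x) =
       (P - F x - (real j + 1) * (F (x + \<tau>) - F x)) + \<rho> * (P - F a - (F (x + \<tau>) - F x)) - (1 + \<rho>) * dev"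
      unfolding devid sq by (simp add: algebra_simps)
    have "\<bar>F t - F x - s * (F (x + \<tau>) - F x)\<bar> \<le>
        (real j + 1) * real j / 2 * W + \<rho> * (real j * W) + (1 + \<rho>) * W"
    proof -
      have "\<bar>\<rho> * (P - F a - (F (x + \<tau>) - F x))\<bar> \<le> \<rho> * (real j * W)"
        using D \<rho>0 unfolding P_def a_def by (simp add: abs_mult mult_left_mono)
      moreover have "\<bar>(1 + \<rho>) * dev\<bar> \<le> (1 + \<rho>) * W"
        using C \<rho>0 unfolding dev_def P_def by (simp add: abs_mult mult_left_mono)
      ultimately show ?thesis unfolding key using T unfolding P_def by linarith
    qed
    also have "\<dots> \<le> W * (1 + s\<^sup>2 / 2)"
    proof -
      have "1 + s\<^sup>2 / 2 - ((real j + 1) * real j / 2 + \<rho> * real j + (1 + \<rho>)) = (real j + 1) / 2 + \<rho>\<^sup>2 / 2"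
        unfolding sq power2_eq_square by (simp add: field_simps)
      moreover have "0 \<le> (real j + 1) / 2 + \<rho>\<^sup>2 / 2" by simp
      ultimately have "(real j + 1) * real j / 2 + \<rho> * real j + (1 + \<rho>) \<le> 1 + s\<^sup>2 / 2" by linarith
      then have "W * ((real j + 1) * real j / 2 + \<rho> * real j + (1 + \<rho>)) \<le> W * (1 + s\<^sup>2 / 2)"
        using W0 by (rule mult_left_mono)
      then show ?thesis by (simp add: algebra_simps)
    qed
    finally show ?thesis unfolding s_def .
  qed
qed

lemma right_gen:
  fixes F :: "real \<Rightarrow> real"
  assumes H: "DH F \<tau> W" and t0: "0 < \<tau>" and cF: "continuous_on {0..1} F"
    and x: "0 \<le> x" "x + \<tau> \<le> 1" and t: "x \<le> t" "t \<le> 1"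
  shows "\<bar>F t - F x - l * (t - x)\<bar> \<le> W * (1 + ((t - x) / \<tau>)\<^sup>2 / 2) + ((t - x) / \<tau>) * \<bar>F (x + \<tau>) - F x - l * \<tau>\<bar>"
proof -
  define s where "s = (t - x) / \<tau>"
  have s0: "0 \<le> s" unfolding s_def using t t0 by simp
  have "F t - F x - l * (t - x) = (F t - F x - s * (F (x + \<tau>) - F x)) + s * (F (x + \<tau>) - F x - l * \<tau>)"
    unfolding s_def using t0 by (simp add: field_simps)
  moreover have "\<bar>s * (F (x + \<tau>) - F x - l * \<tau>)\<bar> = s * \<bar>F (x + \<tau>) - F x - l * \<tau>\<bar>"
    using s0 by (simp add: abs_mult)
  ultimately show ?thesis using right_bound0[OF H t0 cF x t] unfolding s_def[symmetric] by linarith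
qed

lemma left_bound:
  fixes F :: "real \<Rightarrow> real"
  assumes H: "DH F \<tau> W" and t0: "0 < \<tau>" and cF: "continuous_on {0..1} F"
    and x: "0 \<le> x" "x + \<tau> \<le> 1" and t: "0 \<le> t" "t \<le> x" "x - t \<le> \<tau>"
  shows "\<bar>F t - F x - ((t - x) / \<tau>) * (F (x + \<tau>) - F x)\<bar> \<le> W * (1 + (x - t) / \<tau>)"
proof -
  define \<rho> where "\<rho> = (x - t) / \<tau>"
  have \<rho>0: "0 \<le> \<rho>" "\<rho> \<le> 1" unfolding \<rho>_def using t t0 by auto
  define \<theta> where "\<theta> = \<rho> / (1 + \<rho>)"
  have ba: "(x + \<tau>) - t = (1 + \<rho>) * \<tau>" unfolding \<rho>_def using t0 by (simp add: field_simps)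
  have "\<theta> * ((x + \<tau>) - t) = \<rho> * \<tau>" unfolding ba \<theta>_def using \<rho>0 by simp
  then have pt: "t + \<theta> * ((x + \<tau>) - t) = x" unfolding \<rho>_def using t0 by simp
  have "\<bar>F (t + \<theta> * ((x + \<tau>) - t)) - (1 - \<theta>) * F t - \<theta> * F (x + \<tau>)\<bar> \<le> W"
  proof (rule chord_all[OF H _ cF])
    show "t \<in> {0..1}" "x + \<tau> \<in> {0..1}" using t x t0 by auto
    show "\<bar>x + \<tau> - t\<bar> \<le> 2 * \<tau>" unfolding ba using \<rho>0 t0 by (simp add: abs_mult)
    show "\<theta> \<in> {0..1}" unfolding \<theta>_def using \<rho>0 by auto
  qed (use t0 in simp)
  then have C: "\<bar>F x - (1 - \<theta>) * F t - \<theta> * F (x + \<tau>)\<bar> \<le> W" unfolding pt .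
  have h1: "(1 + \<rho>) * (1 - \<theta>) = 1" unfolding \<theta>_def using \<rho>0 by (simp add: field_simps)
  have h2: "(1 + \<rho>) * \<theta> = \<rho>" unfolding \<theta>_def using \<rho>0 by simp
  have "(1 + \<rho>) * (F x - (1 - \<theta>) * F t - \<theta> * F (x + \<tau>)) =
      (1 + \<rho>) * F x - ((1 + \<rho>) * (1 - \<theta>)) * F t - ((1 + \<rho>) * \<theta>) * F (x + \<tau>)"
    by algebra
  then have dv: "(1 + \<rho>) * (F x - (1 - \<theta>) * F t - \<theta> * F (x + \<tau>)) = (1 + \<rho>) * F x - F t - \<rho> * F (x + \<tau>)"
    unfolding h1 h2 by simp
  have "(t - x) / \<tau> = - \<rho>" unfolding \<rho>_def by (metis minus_diff_eq minus_divide_left)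
  then have "F t - F x - ((t - x) / \<tau>) * (F (x + \<tau>) - F x) = - ((1 + \<rho>) * (F x - (1 - \<theta>) * F t - \<theta> * F (x + \<tau>)))"
    unfolding dv by (simp add: algebra_simps)
  then have "\<bar>F t - F x - ((t - x) / \<tau>) * (F (x + \<tau>) - F x)\<bar> = (1 + \<rho>) * \<bar>F x - (1 - \<theta>) * F t - \<theta> * F (x + \<tau>)\<bar>"
    using \<rho>0 by (simp add: abs_mult)
  also have "\<dots> \<le> (1 + \<rho>) * W" using C \<rho>0 by (simp add: mult_left_mono)
  finally show ?thesis unfolding \<rho>_def by (simp add: algebra_simps)
qed

lemma ineq1: "1 + s\<^sup>2 / 2 + s / 2 \<le> 3 / 2 + 3 / 4 * (s::real)\<^sup>2"
proof -
  have "3 / 2 + 3 / 4 * s\<^sup>2 - (1 + s\<^sup>2 / 2 + s / 2) = (s - 1)\<^sup>2 / 4 + 1 / 4"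
    by (simp add: power2_eq_square field_simps)
  moreover have "0 \<le> (s - 1)\<^sup>2 / 4 + 1 / 4" by simp
  ultimately show ?thesis by linarith
qed

lemma ineq2: "1 + r \<le> 3 / 2 + 3 / 4 * (r::real)\<^sup>2"
proof -
  have "3 / 2 + 3 / 4 * r\<^sup>2 - (1 + r) = 3 / 4 * (r - 2 / 3)\<^sup>2 + 1 / 6"
    by (simp add: power2_eq_square field_simps)
  moreover have "0 \<le> 3 / 4 * (r - 2 / 3)\<^sup>2 + 1 / 6" by simp
  ultimately show ?thesis by linarith
qed

lemma KL0:
  fixes F :: "real \<Rightarrow> real"
  assumes H: "DH F \<tau> W" and t0: "0 < \<tau>" and cF: "continuous_on {0..1} F"
    and x: "0 \<le> x" "x + \<tau> \<le> 1"
  shows "\<exists>l. \<forall>t\<in>{0..1}. \<bar>F t - F x - l * (t - x)\<bar> \<le> W * (3 / 2 + 3 / 4 * ((t - x) / \<tau>)\<^sup>2)"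
proof -
  have W0: "0 \<le> W" using DH_W_nonneg[OF H] t0 by simp
  show ?thesis
  proof (cases "\<tau> \<le> x")
    case True
    define l where "l = (F (x + \<tau>) - F (x - \<tau>)) / (2 * \<tau>)"
    have \<Delta>: "\<bar>F (x - \<tau>) - 2 * F x + F (x + \<tau>)\<bar> \<le> W"
      by (rule DH_D[OF H]) (use True x t0 in auto)
    have lt: "l * \<tau> = (F (x + \<tau>) - F (x - \<tau>)) / 2" unfolding l_def using t0 by simp
    show ?thesis
    proof (intro exI[of _ l] ballI)
      fix t :: real assume t: "t \<in> {0..1}"
      show "\<bar>F t - F x - l * (t - x)\<bar> \<le> W * (3 / 2 + 3 / 4 * ((t - x) / \<tau>)\<^sup>2)"
      proof (cases "x \<le> t")
        case True
        define s where "s = (t - x) / \<tau>"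
        have s0: "0 \<le> s" unfolding s_def using True t0 by simp
        have "\<bar>F (x + \<tau>) - F x - l * \<tau>\<bar> = \<bar>F (x - \<tau>) - 2 * F x + F (x + \<tau>)\<bar> / 2"
          unfolding lt by (simp add: field_simps)
        then have "\<bar>F (x + \<tau>) - F x - l * \<tau>\<bar> \<le> W / 2" using \<Delta> by simp
        then have "s * \<bar>F (x + \<tau>) - F x - l * \<tau>\<bar> \<le> s * (W / 2)" using s0 by (rule mult_left_mono)
        moreover have "\<bar>F t - F x - l * (t - x)\<bar> \<le> W * (1 + s\<^sup>2 / 2) + s * \<bar>F (x + \<tau>) - F x - l * \<tau>\<bar>"
          unfolding s_def by (rule right_gen[OF H t0 cF x True]) (use t in simp)
        moreover have "W * (1 + s\<^sup>2 / 2 + s / 2) \<le> W * (3 / 2 + 3 / 4 * s\<^sup>2)"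
          by (rule mult_left_mono[OF ineq1 W0])
        ultimately show ?thesis unfolding s_def[symmetric] by (simp add: algebra_simps)
      next
        case False
        define G where "G y = F (1 - y)" for y
        have HG: "DH G \<tau> W" unfolding G_def by (rule DH_refl[OF H])
        have cG: "continuous_on {0..1} G"
        proof -
          have "continuous_on {0..1} (\<lambda>y::real. 1 - y)" by (intro continuous_intros)
          moreover have "(\<lambda>y::real. 1 - y) ` {0..1} \<subseteq> {0..1}" by auto
          ultimately show ?thesis unfolding G_def using continuous_on_compose2[OF cF] by blast
        qed
        define s where "s = (x - t) / \<tau>"
        have s0: "0 \<le> s" unfolding s_def using False t0 by simp
        have R: "\<bar>G (1 - t) - G (1 - x) - (- l) * ((1 - t) - (1 - x))\<bar> \<le>
            W * (1 + (((1 - t) - (1 - x)) / \<tau>)\<^sup>2 / 2) + (((1 - t) - (1 - x)) / \<tau>) * \<bar>G ((1 - x) + \<tau>) - G (1 - x) - (- l) * \<tau>\<bar>"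
          by (rule right_gen[OF HG t0 cG]) (use x True False t t0 in auto)
        have e1: "(1 - t) - (1 - x) = x - t" by simp
        have e2: "G (1 - t) = F t" "G (1 - x) = F x" "G ((1 - x) + \<tau>) = F (x - \<tau>)" unfolding G_def by simp_all
        have "F (x - \<tau>) - F x - (- l) * \<tau> = F (x - \<tau>) - F x + l * \<tau>" by simp
        also have "\<dots> = (F (x - \<tau>) - 2 * F x + F (x + \<tau>)) / 2" unfolding lt by (simp add: field_simps)
        finally have eq: "F (x - \<tau>) - F x - (- l) * \<tau> = (F (x - \<tau>) - 2 * F x + F (x + \<tau>)) / 2" .
        have "\<bar>G ((1 - x) + \<tau>) - G (1 - x) - (- l) * \<tau>\<bar> = \<bar>F (x - \<tau>) - 2 * F x + F (x + \<tau>)\<bar> / 2"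
          unfolding e2 eq by simp
        then have "\<bar>G ((1 - x) + \<tau>) - G (1 - x) - (- l) * \<tau>\<bar> \<le> W / 2" using \<Delta> by simp
        then have "s * \<bar>G ((1 - x) + \<tau>) - G (1 - x) - (- l) * \<tau>\<bar> \<le> s * (W / 2)" using s0 by (rule mult_left_mono)
        moreover have "W * (1 + s\<^sup>2 / 2 + s / 2) \<le> W * (3 / 2 + 3 / 4 * s\<^sup>2)"
          by (rule mult_left_mono[OF ineq1 W0])
        moreover have "G (1 - t) - G (1 - x) - (- l) * ((1 - t) - (1 - x)) = F t - F x - l * (t - x)"
          unfolding e2 e1 by (simp add: algebra_simps)
        moreover have "((t - x) / \<tau>)\<^sup>2 = s\<^sup>2" unfolding s_def by (simp add: power2_eq_square field_simps)
        ultimately show ?thesis using R unfolding e1 s_def[symmetric] by (simp add: algebra_simps)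
      qed
    qed
  next
    case False
    define l where "l = (F (x + \<tau>) - F x) / \<tau>"
    show ?thesis
    proof (intro exI[of _ l] ballI)
      fix t :: real assume t: "t \<in> {0..1}"
      show "\<bar>F t - F x - l * (t - x)\<bar> \<le> W * (3 / 2 + 3 / 4 * ((t - x) / \<tau>)\<^sup>2)"
      proof (cases "x \<le> t")
        case True
        define s where "s = (t - x) / \<tau>"
        have "\<bar>F t - F x - l * (t - x)\<bar> \<le> W * (1 + s\<^sup>2 / 2) + s * \<bar>F (x + \<tau>) - F x - l * \<tau>\<bar>"
          unfolding s_def by (rule right_gen[OF H t0 cF x True]) (use t in simp)
        moreover have "F (x + \<tau>) - F x - l * \<tau> = 0" unfolding l_def using t0 by simp
        moreover have "W * (1 + s\<^sup>2 / 2 + s / 2) \<le> W * (3 / 2 + 3 / 4 * s\<^sup>2)"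
          by (rule mult_left_mono[OF ineq1 W0])
        moreover have "0 \<le> W * s" unfolding s_def using W0 True t0 by simp
        ultimately show ?thesis unfolding s_def[symmetric] by (simp add: algebra_simps)
      next
        case f2: False
        define r where "r = (x - t) / \<tau>"
        have "\<bar>F t - F x - ((t - x) / \<tau>) * (F (x + \<tau>) - F x)\<bar> \<le> W * (1 + r)"
          unfolding r_def by (rule left_bound[OF H t0 cF x]) (use t f2 False in auto)
        moreover have "l * (t - x) = ((t - x) / \<tau>) * (F (x + \<tau>) - F x)" unfolding l_def by simp
        moreover have "W * (1 + r) \<le> W * (3 / 2 + 3 / 4 * r\<^sup>2)" by (rule mult_left_mono[OF ineq2 W0])
        moreover have "((t - x) / \<tau>)\<^sup>2 = r\<^sup>2" unfolding r_def by (simp add: power2_eq_square field_simps)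
        ultimately show ?thesis by simp
      qed
    qed
  qed
qed

lemma KL:
  fixes F :: "real \<Rightarrow> real"
  assumes H: "DH F \<tau> W" and t0: "0 < \<tau>" and th: "\<tau> \<le> 1 / 2" and cF: "continuous_on {0..1} F"
    and x: "x \<in> {0..1}"
  shows "\<exists>l. \<forall>t\<in>{0..1}. \<bar>F t - F x - l * (t - x)\<bar> \<le> 3 / 2 * W + 3 * W / (4 * \<tau>\<^sup>2) * (t - x)\<^sup>2"
proof -
  have conv: "W * (3 / 2 + 3 / 4 * ((t - x) / \<tau>)\<^sup>2) = 3 / 2 * W + 3 * W / (4 * \<tau>\<^sup>2) * (t - x)\<^sup>2" for t
    by (simp add: power_divide field_simps)
  show ?thesis
  proof (cases "x + \<tau> \<le> 1")
    case True
    then show ?thesis using KL0[OF H t0 cF _ True] x unfolding conv by auto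
  next
    case False
    define G where "G y = F (1 - y)" for y
    have HG: "DH G \<tau> W" unfolding G_def by (rule DH_refl[OF H])
    have cG: "continuous_on {0..1} G"
    proof -
      have "continuous_on {0..1} (\<lambda>y::real. 1 - y)" by (intro continuous_intros)
      moreover have "(\<lambda>y::real. 1 - y) ` {0..1} \<subseteq> {0..1}" by auto
      ultimately show ?thesis unfolding G_def using continuous_on_compose2[OF cF] by blast
    qed
    obtain l where l: "\<forall>t\<in>{0..1}. \<bar>G t - G (1 - x) - l * (t - (1 - x))\<bar> \<le> W * (3 / 2 + 3 / 4 * ((t - (1 - x)) / \<tau>)\<^sup>2)"
      using KL0[OF HG t0 cG, of "1 - x"] False th x by auto
    show ?thesis
    proof (intro exI[of _ "- l"] ballI)
      fix t :: real assume t: "t \<in> {0..1}"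
      have "1 - t \<in> {0..1}" using t by auto
      with l have A: "\<bar>G (1 - t) - G (1 - x) - l * ((1 - t) - (1 - x))\<bar> \<le> W * (3 / 2 + 3 / 4 * (((1 - t) - (1 - x)) / \<tau>)\<^sup>2)"
        by blast
      have B: "G (1 - t) - G (1 - x) - l * ((1 - t) - (1 - x)) = F t - F x - (- l) * (t - x)"
        unfolding G_def by (simp add: algebra_simps)
      have C: "(((1 - t) - (1 - x)) / \<tau>)\<^sup>2 = ((t - x) / \<tau>)\<^sup>2" by (simp add: power2_eq_square field_simps)
      have X: "\<bar>F t - F x - (- l) * (t - x)\<bar> \<le> W * (3 / 2 + 3 / 4 * ((t - x) / \<tau>)\<^sup>2)"
        using A unfolding B C .
      show "\<bar>F t - F x - - l * (t - x)\<bar> \<le> 3 / 2 * W + 3 * W / (4 * \<tau>\<^sup>2) * (t - x)\<^sup>2"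
        unfolding conv[symmetric] by (rule X)
    qed
  qed
qed

lemma e_omega:
  fixes F :: "real \<Rightarrow> real"
  assumes n: "n \<ge> 1" and H: "DH F (1 / sqrt (6 * real n)) W" and cF: "continuous_on {0..1} F"
  shows "\<bar>integral {0..1} F - Qn n F\<bar> \<le> 9 / 4 * W"
proof -
  define \<tau> where "\<tau> = 1 / sqrt (6 * real n)"
  have t0: "0 < \<tau>" unfolding \<tau>_def using n by simp
  have tsq: "\<tau>\<^sup>2 = 1 / (6 * real n)" unfolding \<tau>_def using n by (simp add: power_divide)
  have th: "\<tau> \<le> 1 / 2"
  proof -
    have "1 / (6 * real n) \<le> 1 / 4" using n by (intro divide_left_mono) auto
    then have "1 / (6 * real n) \<le> (1/2)\<^sup>2" by (simp add: power2_eq_square)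
    then have "\<tau>\<^sup>2 \<le> (1/2)\<^sup>2" unfolding tsq .
    then show ?thesis by (rule power2_le_imp_le) simp
  qed
  have W0: "0 \<le> W" using DH_W_nonneg[OF H] t0 unfolding \<tau>_def by simp
  have "\<bar>integral {0..1} F - Qn n F\<bar> \<le> 3 / 2 * W + 3 * W / (4 * \<tau>\<^sup>2) / (6 * real n)"
  proof (rule e_bound[OF n cF])
    show "0 \<le> 3 * W / (4 * \<tau>\<^sup>2)" using W0 by simp
    fix x :: real assume "x \<in> {0..1}"
    then show "\<exists>l. \<forall>t\<in>{0..1}. \<bar>F t - F x - l * (t - x)\<bar> \<le> 3 / 2 * W + 3 * W / (4 * \<tau>\<^sup>2) * (t - x)\<^sup>2"
      using KL[OF H[folded \<tau>_def] t0 th cF] by blast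
  qed
  also have "3 * W / (4 * \<tau>\<^sup>2) / (6 * real n) = 3 / 4 * W" unfolding tsq using n by (simp add: field_simps)
  finally show ?thesis by simp
qed

lemma omega_upper:
  fixes f :: "real \<Rightarrow> real"
  assumes cf: "continuous_on {0..1} f" and x1: "x - h \<in> {0..1}" and x2: "x + h \<in> {0..1}" and hd: "\<bar>h\<bar> \<le> d"
  shows "\<bar>f (x - h) - 2 * f x + f (x + h)\<bar> \<le> omega2 f d"
proof -
  define S where "S = {\<bar>f (x - h) - 2 * f x + f (x + h)\<bar> | x h.
      x - h \<in> {0..1} \<and> x + h \<in> {0..1} \<and> \<bar>h\<bar> \<le> d}"
  have bdd: "bdd_above S"
  proof (rule bdd_aboveI)
    fix z assume "z \<in> S"
    then obtain x h where z: "z = \<bar>f (x - h) - 2 * f x + f (x + h)\<bar>" and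
      a: "x - h \<in> {0..1}" "x + h \<in> {0..1}" unfolding S_def by blast
    have "x \<in> {0..1}" using a by auto
    then have "\<bar>f x\<bar> \<le> supnorm01 f" "\<bar>f (x - h)\<bar> \<le> supnorm01 f" "\<bar>f (x + h)\<bar> \<le> supnorm01 f"
      using sup01[OF cf] a by auto
    then show "z \<le> 4 * supnorm01 f" unfolding z by linarith
  qed
  have "\<bar>f (x - h) - 2 * f x + f (x + h)\<bar> \<in> S" unfolding S_def using x1 x2 hd by blast
  then show ?thesis unfolding omega2_def S_def[symmetric] using bdd by (rule cSup_upper)
qed

lemma DH_panel:
  fixes f :: "real \<Rightarrow> real" and m n k :: nat
  assumes m: "m \<ge> 1" and n: "n \<ge> 1" and k: "k \<in> {1..m}" and cf: "continuous_on {0..1} f"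
  shows "DH (\<lambda>y. f ((real k - 1) / m + y / m)) (1 / sqrt (6 * real n)) (omega2 f (1 / (real m * sqrt (6 * real n))))"
  unfolding DH_def
proof (intro allI impI)
  fix y s :: real
  assume a: "y - s \<in> {0..1} \<and> y + s \<in> {0..1} \<and> \<bar>s\<bar> \<le> 1 / sqrt (6 * real n)"
  define X where "X = (real k - 1) / m + y / m"
  define h where "h = s / m"
  have e1: "(real k - 1) / m + (y - s) / m = X - h" unfolding X_def h_def by (simp add: diff_divide_distrib)
  have e2: "(real k - 1) / m + (y + s) / m = X + h" unfolding X_def h_def by (simp add: add_divide_distrib)
  have "\<bar>f (X - h) - 2 * f X + f (X + h)\<bar> \<le> omega2 f (1 / (real m * sqrt (6 * real n)))"
  proof (rule omega_upper[OF cf])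
    show "X - h \<in> {0..1}" using panel_pt[OF m k, of "y - s"] a unfolding e1 by blast
    show "X + h \<in> {0..1}" using panel_pt[OF m k, of "y + s"] a unfolding e2 by blast
    have "\<bar>h\<bar> = \<bar>s\<bar> / m" unfolding h_def by simp
    also have "\<dots> \<le> (1 / sqrt (6 * real n)) / m" using a by (intro divide_right_mono) auto
    also have "\<dots> = 1 / (real m * sqrt (6 * real n))" by simp
    finally show "\<bar>h\<bar> \<le> 1 / (real m * sqrt (6 * real n))" .
  qed
  then show "\<bar>f ((real k - 1) / m + (y - s) / m) - 2 * f ((real k - 1) / m + y / m) + f ((real k - 1) / m + (y + s) / m)\<bar>
      \<le> omega2 f (1 / (real m * sqrt (6 * real n)))"
    unfolding e1 e2 X_def .
qed

lemma part_ii: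
  fixes f :: "real \<Rightarrow> real"
  assumes m: "m \<ge> 1" and n: "n \<ge> 1" and cf: "continuous_on {0..1} f"
  shows "\<bar>integral {0..1} f - Inm n m f\<bar> \<le> 9 / 4 * omega2 f (1 / (real m * sqrt (6 * real n)))"
proof -
  define W where "W = omega2 f (1 / (real m * sqrt (6 * real n)))"
  define F where "F k y = f ((real k - 1) / m + y / m)" for k y
  have each: "\<bar>integral {0..1} (F k) - Qn n (F k)\<bar> \<le> 9 / 4 * W" if k: "k \<in> {1..m}" for k
    unfolding F_def W_def by (rule e_omega[OF n DH_panel[OF m n k cf] panel_cont[OF m k cf]])
  have "\<bar>integral {0..1} f - Inm n m f\<bar> = \<bar>1 / real m * (\<Sum>k=1..m. integral {0..1} (F k) - Qn n (F k))\<bar>"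
    using panel_decomp[OF m n cf] unfolding F_def by simp
  also have "\<dots> \<le> 1 / real m * (\<Sum>k=1..m. \<bar>integral {0..1} (F k) - Qn n (F k)\<bar>)"
    unfolding abs_mult by (rule mult_mono) (auto intro: sum_abs)
  also have "\<dots> \<le> 1 / real m * (\<Sum>k=1..m. 9 / 4 * W)"
    by (rule mult_left_mono[OF sum_mono]) (use each in auto)
  also have "\<dots> = 9 / 4 * W" using m by simp
  finally show ?thesis unfolding W_def .
qed

lemma part_i:
  fixes f :: "real \<Rightarrow> real"
  assumes m: "m \<ge> 1" and n: "n \<ge> 1" and cf: "continuous_on {0..1} f"
  shows "\<bar>integral {0..1} f - Inm n m f\<bar> \<le> 2 * Kfun (1 / (24 * (real m)^2 * real n)) f"
proof -
  define \<delta> where "\<delta> = 1 / (24 * (real m)^2 * real n)"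
  define S where "S = {supnorm01 (\<lambda>x. f x - g x) + \<delta> * supnorm01 g2 | g g1 g2. C2_01 g g1 g2}"
  have ne: "S \<noteq> {}"
  proof -
    have "C2_01 (\<lambda>_. 0) (\<lambda>_. 0) (\<lambda>_. 0)" unfolding C2_01_def by auto
    then show ?thesis unfolding S_def by blast
  qed
  have "\<bar>integral {0..1} f - Inm n m f\<bar> / 2 \<le> Inf S"
  proof (rule cInf_greatest[OF ne])
    fix z assume "z \<in> S"
    then obtain g g1 g2 where z: "z = supnorm01 (\<lambda>x. f x - g x) + \<delta> * supnorm01 g2" and C: "C2_01 g g1 g2"
      unfolding S_def by blast
    show "\<bar>integral {0..1} f - Inm n m f\<bar> / 2 \<le> z"
      using part_i_single[OF m n cf C] unfolding z \<delta>_def by simp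
  qed
  then show ?thesis unfolding Kfun_def S_def \<delta>_def by simp
qed

theorem mainTheorem6:
  fixes f :: "real \<Rightarrow> real" and m n :: nat
  assumes "m \<ge> 1" and "n \<ge> 1" and "continuous_on {0..1} f"
  shows "\<bar>integral {0..1} f - Inm n m f\<bar> \<le> 2 * Kfun (1 / (24 * (real m)^2 * real n)) f \<and>
    \<bar>integral {0..1} f - Inm n m f\<bar> \<le> 9 / 4 * omega2 f (1 / (real m * sqrt (6 * real n)))"
  using part_i[OF assms] part_ii[OF assms] by blast


end
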